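(* Let $\ell(c)$ be a Banach function space of real sequences with $\ell^1\subset\ell(c)\subset\ell^0$ having the Fatou property, and let $M=(a_{ij})$ be an infinite real matrix whose columns $C_j=(a_{ij})_i$ are nonzero, satisfy $C_j\in\ell(c)$ for all $j$, and $\sup_j\|C_j\|_{\ell(c)}<\infty$ (so that $M$ defines a continuous linear operator $M\colon\ell^1\to\ell(c)$, $Mx=(\sum_ja_{ij}x_j)_i$). Let $p>1$. The following are equivalent: (a) $M$ defines a continuous linear operator $M\colon\ell^p\to\ell(c)$, i.e. for every $x\in\ell^p$ the series $\sum_ja_{ij}x_j$ converge for all $i$, $Mx\in\ell(c)$, and $x\mapsto Mx$ is bounded from $\ell^p$ to $\ell(c)$; (b) $M\colon\ell^1\to\ell(c)$ is $\frac1p$-th power factorable with a continuous extension, i.e. it admits a continuous linear extension $\ell^p\to\ell(c)$; (c) $\ell^p\subset\ell^1(m_M)$; (d) $\ell^1\subset\ell^{1/p}(m_M)\cap\ell^1(m_M)$; (e) there exists $C>0$ such that $\big\|\sum_{j\in F}x_jC_j\big\|_{\ell(c)}\le C\big(\sum_{j\in F}x_j^p\big)^{1/p}$ for all finite $F\subset\mathbb N$ and all $(x_j)_{j\in F}\subset[0,\infty)$.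
   Context: $\ell^0$ is the space of all real sequences. A Banach function space of sequences $\ell(c)\subset\ell^0$ is a vector subspace, solid under the coordinatewise order, complete under a norm monotone for that order. Fatou property: if $(x^k)\subset\ell(c)$, $0\le x^k\uparrow x$ pointwise and $\sup_k\|x^k\|<\infty$, then $x\in\ell(c)$ and $\|x^k\|\uparrow\|x\|$. $\mathcal P_F(\mathbb N)$ is the $\delta$-ring of finite subsets of $\mathbb N$; $m_M\colon\mathcal P_F(\mathbb N)\to\ell(c)$, $m_M(A)=M\chi_A=\sum_{j\in A}C_j$, is a vector measure whose only null set is $\emptyset$. For $x^*\in\ell(c)^*$, $|x^*m_M|$ is the variation of $x^*\circ m_M$ on $\mathcal P(\mathbb N)$. $\ell^1(m_M)$ is the set of $x\in\ell^0$ with $x\in L^1(|x^*m_M|)$ for every $x^*\in\ell(c)^*$ and such that for each $A\subset\mathbb N$ there is $\int_Ax\,dm_M\in\ell(c)$ with $x^*(\int_Ax\,dm_M)=\int_Ax\,dx^*m_M$ for all $x^*$. For $r\in(0,\infty)$, $\ell^r(m_M)=\{x\in\ell^0:|x|^r\in\ell^1(m_M)\}$. *)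

theory Defs
  imports "HOL-Analysis.Analysis"
begin

type_synonym seq = "nat \<Rightarrow> real"

definition bfs :: "seq set \<Rightarrow> (seq \<Rightarrow> real) \<Rightarrow> bool" where
  "bfs L N \<longleftrightarrow>
     (\<lambda>i. 0) \<in> L \<and>
     (\<forall>x\<in>L. \<forall>y\<in>L. (\<lambda>i. x i + y i) \<in> L) \<and>
     (\<forall>c. \<forall>x\<in>L. (\<lambda>i. c * x i) \<in> L) \<and>
     (\<forall>x\<in>L. \<forall>y. (\<forall>i. \<bar>y i\<bar> \<le> \<bar>x i\<bar>) \<longrightarrow> y \<in> L \<and> N y \<le> N x) \<and>
     (\<forall>x\<in>L. 0 \<le> N x \<and> (N x = 0 \<longleftrightarrow> x = (\<lambda>i. 0))) \<and>
     (\<forall>c. \<forall>x\<in>L. N (\<lambda>i. c * x i) = \<bar>c\<bar> * N x) \<and>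
     (\<forall>x\<in>L. \<forall>y\<in>L. N (\<lambda>i. x i + y i) \<le> N x + N y) \<and>
     (\<forall>X. (\<forall>n. X n \<in> L) \<longrightarrow>
          (\<forall>e>0. \<exists>n0. \<forall>m\<ge>n0. \<forall>n\<ge>n0. N (\<lambda>i. X m i - X n i) < e) \<longrightarrow>
          (\<exists>y\<in>L. (\<lambda>n. N (\<lambda>i. X n i - y i)) \<longlonglongrightarrow> 0))"

definition fatou :: "seq set \<Rightarrow> (seq \<Rightarrow> real) \<Rightarrow> bool" where
  "fatou L N \<longleftrightarrow>
     (\<forall>X x. (\<forall>k. X k \<in> L) \<and> (\<forall>k i. 0 \<le> X k i) \<and> (\<forall>k i. X k i \<le> X (Suc k) i) \<and>
            (\<forall>i. (\<lambda>k. X k i) \<longlonglongrightarrow> x i) \<and> (\<exists>B. \<forall>k. N (X k) \<le> B)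
        \<longrightarrow> x \<in> L \<and> mono (\<lambda>k. N (X k)) \<and> (\<lambda>k. N (X k)) \<longlonglongrightarrow> N x)"

definition ell1 :: "seq set" where
  "ell1 = {x. summable (\<lambda>i. \<bar>x i\<bar>)}"

definition ellp :: "real \<Rightarrow> seq set" where
  "ellp p = {x. summable (\<lambda>i. \<bar>x i\<bar> powr p)}"

definition ellp_norm :: "real \<Rightarrow> seq \<Rightarrow> real" where
  "ellp_norm p x = (\<Sum>i. \<bar>x i\<bar> powr p) powr (1 / p)"

definition col :: "(nat \<Rightarrow> nat \<Rightarrow> real) \<Rightarrow> nat \<Rightarrow> seq" where
  "col a j = (\<lambda>i. a i j)"

definition matop :: "(nat \<Rightarrow> nat \<Rightarrow> real) \<Rightarrow> seq \<Rightarrow> seq" where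
  "matop a x = (\<lambda>i. \<Sum>j. a i j * x j)"

definition bfs_dual :: "seq set \<Rightarrow> (seq \<Rightarrow> real) \<Rightarrow> (seq \<Rightarrow> real) set" where
  "bfs_dual L N = {\<phi>. (\<forall>x\<in>L. \<forall>y\<in>L. \<phi> (\<lambda>i. x i + y i) = \<phi> x + \<phi> y) \<and>
                      (\<forall>c. \<forall>x\<in>L. \<phi> (\<lambda>i. c * x i) = c * \<phi> x) \<and>
                      (\<exists>K. \<forall>x\<in>L. \<bar>\<phi> x\<bar> \<le> K * N x)}"

text \<open>Vector measure m_M(A) = sum_{j in A} C_j on finite sets.\<close>
definition mM :: "(nat \<Rightarrow> nat \<Rightarrow> real) \<Rightarrow> nat set \<Rightarrow> seq" where
  "mM a A = (\<lambda>i. \<Sum>j\<in>A. a i j)"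

text \<open>L^1(m_M): x is integrable w.r.t. |x* m_M| for every x* (the variation
  |x* m_M| is the point-mass measure with weights |x*(m_M{j})|), and for every
  A there is an element of L representing the integral over A.\<close>
definition ell1_mM :: "seq set \<Rightarrow> (seq \<Rightarrow> real) \<Rightarrow> (nat \<Rightarrow> nat \<Rightarrow> real) \<Rightarrow> seq set" where
  "ell1_mM L N a = {x.
     (\<forall>\<phi>\<in>bfs_dual L N. summable (\<lambda>j. \<bar>x j\<bar> * \<bar>\<phi> (mM a {j})\<bar>)) \<and>
     (\<forall>A::nat set. \<exists>v\<in>L. \<forall>\<phi>\<in>bfs_dual L N.
         \<phi> v = (\<Sum>j. if j \<in> A then x j * \<phi> (mM a {j}) else 0))}"

definition ellr_mM :: "real \<Rightarrow> seq set \<Rightarrow> (seq \<Rightarrow> real) \<Rightarrow> (nat \<Rightarrow> nat \<Rightarrow> real) \<Rightarrow> seq set" where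
  "ellr_mM r L N a = {x. (\<lambda>j. \<bar>x j\<bar> powr r) \<in> ell1_mM L N a}"

end

theory Submission
  imports Defs
begin

locale bctx =
  fixes L :: "seq set" and N :: "seq \<Rightarrow> real"
  assumes bfs: "bfs L N" and l1_sub: "ell1 \<subseteq> L"
begin

lemma zero_in: "(\<lambda>i. 0) \<in> L" using bfs unfolding bfs_def by blast
lemma add_in: "x \<in> L \<Longrightarrow> y \<in> L \<Longrightarrow> (\<lambda>i. x i + y i) \<in> L" using bfs unfolding bfs_def by blast
lemma smult_in: "x \<in> L \<Longrightarrow> (\<lambda>i. c * x i) \<in> L" using bfs unfolding bfs_def by blast
lemma solid: "x \<in> L \<Longrightarrow> (\<And>i. \<bar>y i\<bar> \<le> \<bar>x i\<bar>) \<Longrightarrow> y \<in> L \<and> N y \<le> N x"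
  using bfs unfolding bfs_def by blast
lemma N_nonneg: "x \<in> L \<Longrightarrow> 0 \<le> N x" using bfs unfolding bfs_def by blast
lemma N_eq0: "x \<in> L \<Longrightarrow> N x = 0 \<longleftrightarrow> x = (\<lambda>i. 0)" using bfs unfolding bfs_def by blast
lemma N_smult: "x \<in> L \<Longrightarrow> N (\<lambda>i. c * x i) = \<bar>c\<bar> * N x" using bfs unfolding bfs_def by blast
lemma N_tri: "x \<in> L \<Longrightarrow> y \<in> L \<Longrightarrow> N (\<lambda>i. x i + y i) \<le> N x + N y" using bfs unfolding bfs_def by blast
lemma complete: "(\<And>n. X n \<in> L) \<Longrightarrow> (\<And>e. e>0 \<Longrightarrow> \<exists>n0. \<forall>m\<ge>n0. \<forall>n\<ge>n0. N (\<lambda>i. X m i - X n i) < e)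
   \<Longrightarrow> \<exists>y\<in>L. (\<lambda>n. N (\<lambda>i. X n i - y i)) \<longlonglongrightarrow> 0"
  using bfs unfolding bfs_def by blast

lemma N_zero: "N (\<lambda>i. 0) = 0" using N_eq0 zero_in by blast

lemma neg_in: "x \<in> L \<Longrightarrow> (\<lambda>i. - x i) \<in> L" using smult_in[of x "-1"] by simp
lemma N_neg: "x \<in> L \<Longrightarrow> N (\<lambda>i. - x i) = N x" using N_smult[of x "-1"] by simp
lemma diff_in: "x \<in> L \<Longrightarrow> y \<in> L \<Longrightarrow> (\<lambda>i. x i - y i) \<in> L"
  using add_in[OF _ neg_in, of x y] by simp
lemma N_tri_diff: "x \<in> L \<Longrightarrow> y \<in> L \<Longrightarrow> N (\<lambda>i. x i - y i) \<le> N x + N y"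
  using N_tri[OF _ neg_in, of x y] N_neg[of y] by simp
lemma N_commute: "x \<in> L \<Longrightarrow> y \<in> L \<Longrightarrow> N (\<lambda>i. x i - y i) = N (\<lambda>i. y i - x i)"
  using N_neg[OF diff_in, of x y] by simp
lemma N_mono: "x \<in> L \<Longrightarrow> (\<And>i. \<bar>y i\<bar> \<le> \<bar>x i\<bar>) \<Longrightarrow> N y \<le> N x" using solid by blast
lemma in_mono: "x \<in> L \<Longrightarrow> (\<And>i. \<bar>y i\<bar> \<le> \<bar>x i\<bar>) \<Longrightarrow> y \<in> L" using solid by blast

lemma sum_in: "finite F \<Longrightarrow> (\<And>j. j \<in> F \<Longrightarrow> f j \<in> L) \<Longrightarrow>
   (\<lambda>i. \<Sum>j\<in>F. f j i) \<in> L \<and> N (\<lambda>i. \<Sum>j\<in>F. f j i) \<le> (\<Sum>j\<in>F. N (f j))"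
proof (induction F rule: finite_induct)
  case empty then show ?case using zero_in N_zero by simp
next
  case (insert k F)
  then have h: "(\<lambda>i. \<Sum>j\<in>F. f j i) \<in> L" "N (\<lambda>i. \<Sum>j\<in>F. f j i) \<le> (\<Sum>j\<in>F. N (f j))" "f k \<in> L" by auto
  have "(\<lambda>i. f k i + (\<Sum>j\<in>F. f j i)) \<in> L" using add_in[OF h(3) h(1)] .
  moreover have "N (\<lambda>i. f k i + (\<Sum>j\<in>F. f j i)) \<le> N (f k) + (\<Sum>j\<in>F. N (f j))"
    using N_tri[OF h(3) h(1)] h(2) by (simp add: eta_contract_eq)
  ultimately show ?case using insert by simp
qed

definition ee :: "nat \<Rightarrow> seq" where "ee k = (\<lambda>i. if i = k then 1 else 0)"

lemma ee_in: "ee k \<in> L"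
proof -
  have "summable (\<lambda>i. \<bar>ee k i\<bar>)"
    unfolding ee_def by (rule summable_finite[of "{k}"]) auto
  then show ?thesis using l1_sub unfolding ell1_def by auto
qed

lemma coord_bound: "\<exists>c>0. \<forall>y\<in>L. \<bar>y k\<bar> \<le> c * N y"
proof -
  have nz: "N (ee k) > 0"
  proof -
    have "ee k \<noteq> (\<lambda>i. 0)" unfolding ee_def by (metis one_neq_zero)
    then show ?thesis using N_eq0[OF ee_in[of k]] N_nonneg[OF ee_in[of k]] by linarith
  qed
  have "\<bar>y k\<bar> \<le> (1 / N (ee k)) * N y" if y: "y \<in> L" for y
  proof -
    have "N (\<lambda>i. y k * ee k i) \<le> N y"
      by (rule N_mono[OF y]) (auto simp: ee_def abs_mult)
    then have "\<bar>y k\<bar> * N (ee k) \<le> N y" using N_smult[OF ee_in, of "y k"] by simp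
    then show ?thesis using nz by (simp add: field_simps)
  qed
  then show ?thesis using nz by (intro exI[of _ "1 / N (ee k)"]) auto
qed

end


lemma ellp_mono:
  assumes x: "x \<in> ellp p" and p: "p > 0" and le: "\<And>j. \<bar>y j\<bar> \<le> \<bar>x j\<bar>"
  shows "y \<in> ellp p" "ellp_norm p y \<le> ellp_norm p x"
proof -
  have s: "summable (\<lambda>i. \<bar>x i\<bar> powr p)" using x unfolding ellp_def by auto
  have le2: "\<bar>y i\<bar> powr p \<le> \<bar>x i\<bar> powr p" for i using le[of i] p by (intro powr_mono2) auto
  have sy: "summable (\<lambda>i. \<bar>y i\<bar> powr p)"
    by (rule summable_comparison_test[OF _ s]) (use le2 in auto)
  then show "y \<in> ellp p" unfolding ellp_def by auto
  have "(\<Sum>i. \<bar>y i\<bar> powr p) \<le> (\<Sum>i. \<bar>x i\<bar> powr p)" by (rule suminf_le[OF le2 sy s])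
  then show "ellp_norm p y \<le> ellp_norm p x" unfolding ellp_norm_def using p
    by (intro powr_mono2) (auto intro!: suminf_nonneg sy)
qed

lemma ellp_finsum_le:
  assumes x: "x \<in> ellp p" and p: "p > 0" and F: "finite F"
  shows "(\<Sum>j\<in>F. \<bar>x j\<bar> powr p) powr (1/p) \<le> ellp_norm p x"
proof -
  have s: "summable (\<lambda>i. \<bar>x i\<bar> powr p)" using x unfolding ellp_def by auto
  have "(\<Sum>j\<in>F. \<bar>x j\<bar> powr p) \<le> (\<Sum>i. \<bar>x i\<bar> powr p)" by (rule sum_le_suminf[OF s F]) auto
  then show ?thesis unfolding ellp_norm_def using p by (intro powr_mono2) (auto intro!: sum_nonneg)
qed

lemma ellp_finite_support:
  assumes F: "finite F" and z: "\<And>j. j \<notin> F \<Longrightarrow> x j = 0" and p: "p > 0"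
  shows "x \<in> ellp p" "ellp_norm p x = (\<Sum>j\<in>F. \<bar>x j\<bar> powr p) powr (1/p)"
proof -
  have z2: "\<And>j. j \<notin> F \<Longrightarrow> \<bar>x j\<bar> powr p = 0" using z by simp
  show "x \<in> ellp p" unfolding ellp_def using summable_finite[OF F z2] by auto
  show "ellp_norm p x = (\<Sum>j\<in>F. \<bar>x j\<bar> powr p) powr (1/p)"
    unfolding ellp_norm_def using suminf_finite[OF F z2] by simp
qed

lemma ellp_norm_nonneg: "0 \<le> ellp_norm p x" unfolding ellp_norm_def by simp

lemma ell1_ellp:
  assumes x: "x \<in> ell1" and p: "p \<ge> 1" shows "x \<in> ellp p"
proof -
  have s: "summable (\<lambda>i. \<bar>x i\<bar>)" using x unfolding ell1_def by auto
  then have "(\<lambda>i. \<bar>x i\<bar>) \<longlonglongrightarrow> 0" by (rule summable_LIMSEQ_zero)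
  then obtain n0 where n0: "\<And>n. n \<ge> n0 \<Longrightarrow> \<bar>x n\<bar> < 1"
    by (metis (mono_tags, lifting) LIMSEQ_D abs_abs diff_zero real_norm_def zero_less_one)
  have "\<forall>n\<ge>n0. norm (\<bar>x n\<bar> powr p) \<le> \<bar>x n\<bar>"
  proof (intro allI impI)
    fix n assume "n \<ge> n0"
    then have "\<bar>x n\<bar> < 1" by (rule n0)
    then show "norm (\<bar>x n\<bar> powr p) \<le> \<bar>x n\<bar>"
      using p by (cases "x n = 0") (auto intro: powr_le_one_le)
  qed
  then have "summable (\<lambda>i. \<bar>x i\<bar> powr p)" by (intro summable_comparison_test[OF _ s]) blast
  then show ?thesis unfolding ellp_def by auto
qed



definition fsum :: "(nat \<Rightarrow> nat \<Rightarrow> real) \<Rightarrow> nat set \<Rightarrow> seq \<Rightarrow> seq" where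
  "fsum a F x = (\<lambda>i. \<Sum>j\<in>F. x j * a i j)"

locale mctx = bctx +
  fixes a :: "nat \<Rightarrow> nat \<Rightarrow> real" and p :: real
  assumes cols_in: "\<forall>j. col a j \<in> L" and p: "p > 1"
begin

lemma term_in: "(\<lambda>i. c * a i j) \<in> L"
  using smult_in[of "col a j" c] cols_in unfolding col_def by auto

lemma fsum_in: "finite F \<Longrightarrow> fsum a F x \<in> L"
  unfolding fsum_def using sum_in[of F "\<lambda>j i. x j * a i j"] term_in by auto

lemma fsum_N: "finite F \<Longrightarrow> N (fsum a F x) \<le> (\<Sum>j\<in>F. \<bar>x j\<bar> * N (col a j))"
proof -
  assume F: "finite F"
  have "N (fsum a F x) \<le> (\<Sum>j\<in>F. N (\<lambda>i. x j * a i j))"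
    unfolding fsum_def using sum_in[OF F, of "\<lambda>j i. x j * a i j"] term_in by auto
  also have "\<dots> = (\<Sum>j\<in>F. \<bar>x j\<bar> * N (col a j))"
    using N_smult[of "col a j" "x j" for j] cols_in unfolding col_def by auto
  finally show ?thesis .
qed

lemma fsum_diff: "fsum a F x = (\<lambda>i. fsum a F y i - fsum a F z i)" if "\<And>j. x j = y j - z j"
  unfolding fsum_def using that by (auto simp: sum_subtractf left_diff_distrib)

lemma E2:
  assumes Eb: "\<forall>F x. finite F \<longrightarrow> (\<forall>j\<in>F. 0 \<le> x j) \<longrightarrow>
                N (\<lambda>i. \<Sum>j\<in>F. x j * a i j) \<le> K * (\<Sum>j\<in>F. x j powr p) powr (1 / p)"
    and K: "K \<ge> 0" and F: "finite F"
  shows "N (fsum a F x) \<le> 2 * K * (\<Sum>j\<in>F. \<bar>x j\<bar> powr p) powr (1 / p)"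
proof -
  define xp where "xp j = max (x j) 0" for j
  define xn where "xn j = max (- x j) 0" for j
  have eq: "fsum a F x = (\<lambda>i. fsum a F xp i - fsum a F xn i)"
    by (rule fsum_diff) (auto simp: xp_def xn_def)
  have "N (fsum a F x) \<le> N (fsum a F xp) + N (fsum a F xn)"
    unfolding eq by (rule N_tri_diff[OF fsum_in[OF F] fsum_in[OF F]])
  moreover have "N (fsum a F xp) \<le> K * (\<Sum>j\<in>F. xp j powr p) powr (1 / p)"
    using Eb F unfolding fsum_def xp_def by auto
  moreover have "N (fsum a F xn) \<le> K * (\<Sum>j\<in>F. xn j powr p) powr (1 / p)"
    using Eb F unfolding fsum_def xn_def by auto
  moreover have "(\<Sum>j\<in>F. xp j powr p) powr (1 / p) \<le> (\<Sum>j\<in>F. \<bar>x j\<bar> powr p) powr (1 / p)"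
    using p by (intro powr_mono2 sum_mono sum_nonneg) (auto simp: xp_def intro!: powr_mono2)
  moreover have "(\<Sum>j\<in>F. xn j powr p) powr (1 / p) \<le> (\<Sum>j\<in>F. \<bar>x j\<bar> powr p) powr (1 / p)"
    using p by (intro powr_mono2 sum_mono sum_nonneg) (auto simp: xn_def intro!: powr_mono2)
  ultimately show ?thesis using K mult_left_mono[of "(\<Sum>j\<in>F. xp j powr p) powr (1 / p)" "(\<Sum>j\<in>F. \<bar>x j\<bar> powr p) powr (1 / p)" K]
    mult_left_mono[of "(\<Sum>j\<in>F. xn j powr p) powr (1 / p)" "(\<Sum>j\<in>F. \<bar>x j\<bar> powr p) powr (1 / p)" K]
    by linarith
qed

end


context mctx begin

lemma fsum_split: "n \<le> m \<Longrightarrow> (\<lambda>i. fsum a {..<m} x i - fsum a {..<n} x i) = fsum a {n..<m} x"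
  unfolding fsum_def using sum_diff_nat_ivl[of 0 n m] by (auto simp: atLeast0LessThan)

lemma coord_conv:
  assumes X: "\<And>n. X n \<in> L" and y: "y \<in> L" and lim: "(\<lambda>n. N (\<lambda>i. X n i - y i)) \<longlonglongrightarrow> 0"
  shows "(\<lambda>n. X n k) \<longlonglongrightarrow> y k"
proof -
  obtain c where c: "c > 0" "\<And>z. z \<in> L \<Longrightarrow> \<bar>z k\<bar> \<le> c * N z" using coord_bound[of k] by blast
  have t: "(\<lambda>n. c * N (\<lambda>i. X n i - y i)) \<longlonglongrightarrow> 0"
    using tendsto_mult[OF tendsto_const lim, of c] by simp
  have ev: "eventually (\<lambda>n. norm (X n k - y k) \<le> c * N (\<lambda>i. X n i - y i)) sequentially"
  proof (intro always_eventually allI)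
    fix n show "norm (X n k - y k) \<le> c * N (\<lambda>i. X n i - y i)"
      using c(2)[OF diff_in[OF X y], of n] by simp
  qed
  have "(\<lambda>n. X n k - y k) \<longlonglongrightarrow> 0" by (rule Lim_null_comparison[OF ev t])
  then have "(\<lambda>n. (X n k - y k) + y k) \<longlonglongrightarrow> 0 + y k" by (intro tendsto_add tendsto_const)
  then show ?thesis by simp
qed

lemma strong:
  assumes Eb: "\<forall>F x. finite F \<longrightarrow> (\<forall>j\<in>F. 0 \<le> x j) \<longrightarrow>
                N (\<lambda>i. \<Sum>j\<in>F. x j * a i j) \<le> K * (\<Sum>j\<in>F. x j powr p) powr (1 / p)"
    and K: "K \<ge> 0" and x: "x \<in> ellp p"
  shows "(\<forall>i. summable (\<lambda>j. a i j * x j)) \<and> matop a x \<in> L \<and>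
    (\<lambda>n. N (\<lambda>i. fsum a {..<n} x i - matop a x i)) \<longlonglongrightarrow> 0 \<and>
    N (matop a x) \<le> 2 * K * ellp_norm p x"
proof -
  define X where "X n = fsum a {..<n} x" for n
  have XL: "X n \<in> L" for n unfolding X_def by (rule fsum_in) auto
  have s: "summable (\<lambda>i. \<bar>x i\<bar> powr p)" using x unfolding ellp_def by auto
  have bnd: "N (fsum a {n..<m} x) < e" if e: "e > 0" and n0: "\<forall>m\<ge>n0. \<forall>n. norm (sum (\<lambda>i. \<bar>x i\<bar> powr p) {m..<n}) < (e / (2*K+1)) powr p"
     and nn: "n \<ge> n0" for n m n0 e
  proof -
    define d where "d = (e / (2*K+1)) powr p"
    have "d powr (1/p) = e / (2*K+1)" unfolding d_def using p e K by (simp add: powr_powr)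
    have "norm (\<Sum>j\<in>{n..<m}. \<bar>x j\<bar> powr p) < d" using n0 nn unfolding d_def by blast
    moreover have "(\<Sum>j\<in>{n..<m}. \<bar>x j\<bar> powr p) \<ge> 0" by (intro sum_nonneg) auto
    ultimately have sl: "(\<Sum>j\<in>{n..<m}. \<bar>x j\<bar> powr p) < d" by simp
    then have "(\<Sum>j\<in>{n..<m}. \<bar>x j\<bar> powr p) powr (1/p) < d powr (1/p)"
      using p by (intro powr_less_mono2) (auto intro!: sum_nonneg)
    then have "(\<Sum>j\<in>{n..<m}. \<bar>x j\<bar> powr p) powr (1/p) < e / (2*K+1)"
      using \<open>d powr (1/p) = e / (2*K+1)\<close> by simp
    then have "2*K * (\<Sum>j\<in>{n..<m}. \<bar>x j\<bar> powr p) powr (1/p) \<le> 2*K * (e / (2*K+1))"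
      using K by (intro mult_left_mono) auto
    also have "\<dots> < e" using K e by (simp add: field_simps)
    finally show ?thesis using E2[OF Eb K, of "{n..<m}" x] by simp
  qed
  have cauchy: "\<exists>n0. \<forall>m\<ge>n0. \<forall>n\<ge>n0. N (\<lambda>i. X m i - X n i) < e" if e: "e > 0" for e
  proof -
    have "(e / (2*K+1)) powr p > 0" using e K by simp
    then obtain n0 where n0: "\<forall>m\<ge>n0. \<forall>n. norm (sum (\<lambda>i. \<bar>x i\<bar> powr p) {m..<n}) < (e / (2*K+1)) powr p"
      using s unfolding summable_Cauchy by blast
    have "N (\<lambda>i. X m i - X n i) < e" if "m \<ge> n0" "n \<ge> n0" for m n
    proof (cases "n \<le> m")
      case True
      then show ?thesis unfolding X_def using fsum_split[OF True, of x] bnd[OF e n0 that(2)] by simp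
    next
      case False
      then have "m \<le> n" by simp
      then have "N (\<lambda>i. X n i - X m i) < e"
        unfolding X_def using fsum_split[of m n x] bnd[OF e n0 that(1)] by simp
      then show ?thesis using N_commute[OF XL XL, of m n] by simp
    qed
    then show ?thesis by blast
  qed
  obtain y where y: "y \<in> L" "(\<lambda>n. N (\<lambda>i. X n i - y i)) \<longlonglongrightarrow> 0"
    using complete[of X, OF XL cauchy] by blast
  have sums: "(\<lambda>j. a i j * x j) sums y i" for i
  proof -
    have "(\<lambda>n. X n i) \<longlonglongrightarrow> y i" by (rule coord_conv[OF XL y])
    then show ?thesis unfolding sums_def X_def fsum_def by (simp add: mult.commute)
  qed
  have my: "matop a x = y"
  proof
    fix i show "matop a x i = y i" unfolding matop_def using sums_unique[OF sums[of i]] by simp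
  qed
  have "N y - 2 * K * ellp_norm p x \<le> 0"
  proof (rule LIMSEQ_le_const[OF y(2)], intro exI allI impI)
    fix n
    have e1: "N y = N (\<lambda>i. (y i - X n i) + X n i)" by simp
    have e2: "N (\<lambda>i. (y i - X n i) + X n i) \<le> N (\<lambda>i. y i - X n i) + N (X n)"
      by (rule N_tri[OF diff_in[OF y(1) XL] XL])
    have e3: "N (\<lambda>i. y i - X n i) = N (\<lambda>i. X n i - y i)" using N_commute[OF y(1) XL[of n]] .
    have e4: "N (X n) \<le> 2 * K * (\<Sum>j\<in>{..<n}. \<bar>x j\<bar> powr p) powr (1 / p)"
      unfolding X_def by (rule E2[OF Eb K]) auto
    have e5: "2 * K * (\<Sum>j\<in>{..<n}. \<bar>x j\<bar> powr p) powr (1 / p) \<le> 2 * K * ellp_norm p x"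
      using K ellp_finsum_le[OF x, of "{..<n}"] p by (intro mult_left_mono) auto
    show "N y - 2 * K * ellp_norm p x \<le> N (\<lambda>i. X n i - y i)" using e1 e2 e3 e4 e5 by linarith
  qed
  then have nb: "N (matop a x) \<le> 2 * K * ellp_norm p x" using my by simp
  have sm: "\<forall>i. summable (\<lambda>j. a i j * x j)" using sums_summable[OF sums] by blast
  have lim: "(\<lambda>n. N (\<lambda>i. fsum a {..<n} x i - matop a x i)) \<longlonglongrightarrow> 0"
    using y(2) unfolding my X_def .
  show ?thesis using sm lim nb y(1) my by blast
qed

end


context bctx begin

lemma dual_add: "\<phi> \<in> bfs_dual L N \<Longrightarrow> x \<in> L \<Longrightarrow> y \<in> L \<Longrightarrow> \<phi> (\<lambda>i. x i + y i) = \<phi> x + \<phi> y"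
  unfolding bfs_dual_def by blast
lemma dual_smult: "\<phi> \<in> bfs_dual L N \<Longrightarrow> x \<in> L \<Longrightarrow> \<phi> (\<lambda>i. c * x i) = c * \<phi> x"
  unfolding bfs_dual_def by blast
lemma dual_bound: "\<phi> \<in> bfs_dual L N \<Longrightarrow> \<exists>K\<ge>0. \<forall>x\<in>L. \<bar>\<phi> x\<bar> \<le> K * N x"
proof -
  assume "\<phi> \<in> bfs_dual L N"
  then obtain K where K: "\<forall>x\<in>L. \<bar>\<phi> x\<bar> \<le> K * N x" unfolding bfs_dual_def by blast
  have "\<forall>x\<in>L. \<bar>\<phi> x\<bar> \<le> max K 0 * N x"
  proof
    fix x assume x: "x \<in> L"
    have "K * N x \<le> max K 0 * N x" using N_nonneg[OF x] by (intro mult_right_mono) auto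
    then show "\<bar>\<phi> x\<bar> \<le> max K 0 * N x" using K x by force
  qed
  then show ?thesis by (intro exI[of _ "max K 0"]) auto
qed
lemma dual_diff: "\<phi> \<in> bfs_dual L N \<Longrightarrow> x \<in> L \<Longrightarrow> y \<in> L \<Longrightarrow> \<phi> (\<lambda>i. x i - y i) = \<phi> x - \<phi> y"
proof -
  assume d: "\<phi> \<in> bfs_dual L N" and x: "x \<in> L" and y: "y \<in> L"
  have "\<phi> (\<lambda>i. x i + (-1) * y i) = \<phi> x + \<phi> (\<lambda>i. (-1) * y i)"
    by (rule dual_add[OF d x smult_in[OF y]])
  also have "\<phi> (\<lambda>i. (-1) * y i) = - \<phi> y" using dual_smult[OF d y, of "-1"] by simp
  finally show ?thesis by simp
qed
lemma dual_sum: assumes d: "\<phi> \<in> bfs_dual L N" shows "finite F \<Longrightarrow> (\<And>j. j \<in> F \<Longrightarrow> f j \<in> L) \<Longrightarrow>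
   \<phi> (\<lambda>i. \<Sum>j\<in>F. f j i) = (\<Sum>j\<in>F. \<phi> (f j))"
proof (induction F rule: finite_induct)
  case empty
  have "\<phi> (\<lambda>i. 0 * (\<lambda>i. 0) i) = 0 * \<phi> (\<lambda>i. 0)" by (rule dual_smult[OF d zero_in])
  then show ?case by simp
next
  case (insert k F)
  have "\<phi> (\<lambda>i. f k i + (\<Sum>j\<in>F. f j i)) = \<phi> (f k) + \<phi> (\<lambda>i. \<Sum>j\<in>F. f j i)"
    using dual_add[OF d, of "f k" "\<lambda>i. \<Sum>j\<in>F. f j i"] insert sum_in[of F f]
    by (simp add: eta_contract_eq)
  then show ?case using insert by simp
qed

lemma coord_dual: "(\<lambda>y. y k) \<in> bfs_dual L N"
proof -
  obtain c where "c > 0" "\<forall>y\<in>L. \<bar>y k\<bar> \<le> c * N y" using coord_bound[of k] by blast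
  then show ?thesis unfolding bfs_dual_def by auto
qed

end

context mctx begin

lemma mM_single: "mM a {j} = (\<lambda>i. a i j)" unfolding mM_def by simp

lemma dual_fsum: "\<phi> \<in> bfs_dual L N \<Longrightarrow> finite F \<Longrightarrow> \<phi> (fsum a F x) = (\<Sum>j\<in>F. x j * \<phi> (mM a {j}))"
proof -
  assume d: "\<phi> \<in> bfs_dual L N" and F: "finite F"
  have "\<phi> (fsum a F x) = (\<Sum>j\<in>F. \<phi> (\<lambda>i. x j * a i j))"
    unfolding fsum_def by (rule dual_sum[OF d F]) (rule term_in)
  also have "\<dots> = (\<Sum>j\<in>F. x j * \<phi> (mM a {j}))"
    unfolding mM_single using dual_smult[OF d, of "\<lambda>i. a i j" for j] cols_in unfolding col_def by auto
  finally show ?thesis .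
qed

lemma fin_matop: "finite F \<Longrightarrow> (\<And>j. j \<notin> F \<Longrightarrow> y j = 0) \<Longrightarrow> matop a y = fsum a F y"
  unfolding matop_def fsum_def by (rule ext, subst suminf_finite[of F]) (auto simp: mult.commute)

lemma finsupp_E:
  assumes Kb: "\<forall>y::seq. (\<exists>F::nat set. finite F \<and> (\<forall>j. j \<notin> F \<longrightarrow> y j = 0)) \<longrightarrow> N (matop a y) \<le> K * ellp_norm p y"
  shows "\<exists>K>0. \<forall>F x. finite F \<longrightarrow> (\<forall>j\<in>F. 0 \<le> x j) \<longrightarrow>
                N (\<lambda>i. \<Sum>j\<in>F. x j * a i j) \<le> K * (\<Sum>j\<in>F. x j powr p) powr (1 / p)"
proof (intro exI[of _ "max K 1"] conjI allI impI)
  fix F :: "nat set" and x :: seq assume F: "finite F" and x: "\<forall>j\<in>F. 0 \<le> x j"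
  define y where "y j = (if j \<in> F then x j else 0)" for j
  have z: "\<And>j. j \<notin> F \<Longrightarrow> y j = 0" unfolding y_def by auto
  have "matop a y = fsum a F y" by (rule fin_matop[OF F z])
  also have "\<dots> = (\<lambda>i. \<Sum>j\<in>F. x j * a i j)" unfolding fsum_def y_def by auto
  finally have m: "matop a y = (\<lambda>i. \<Sum>j\<in>F. x j * a i j)" .
  have "ellp_norm p y = (\<Sum>j\<in>F. \<bar>y j\<bar> powr p) powr (1/p)" using ellp_finite_support[OF F z] p by simp
  also have "\<dots> = (\<Sum>j\<in>F. x j powr p) powr (1/p)" using x unfolding y_def by (intro arg_cong2[where f="(powr)"] sum.cong) auto
  finally have n: "ellp_norm p y = (\<Sum>j\<in>F. x j powr p) powr (1/p)" .
  have "N (matop a y) \<le> K * ellp_norm p y" using Kb F z by blast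
  also have "\<dots> \<le> max K 1 * ellp_norm p y" by (intro mult_right_mono ellp_norm_nonneg) auto
  finally show "N (\<lambda>i. \<Sum>j\<in>F. x j * a i j) \<le> max K 1 * (\<Sum>j\<in>F. x j powr p) powr (1 / p)"
    using m n by simp
qed auto

lemma S_C:
  assumes St: "\<forall>x\<in>ellp p. (\<forall>i. summable (\<lambda>j. a i j * x j)) \<and> matop a x \<in> L \<and>
    (\<lambda>n. N (\<lambda>i. fsum a {..<n} x i - matop a x i)) \<longlonglongrightarrow> 0 \<and>
    N (matop a x) \<le> K2 * ellp_norm p x" and K2: "K2 \<ge> 0"
  shows "ellp p \<subseteq> ell1_mM L N a"
proof
  fix x assume x: "x \<in> ellp p"
  have pp: "p > 0" using p by simp
  have part1: "summable (\<lambda>j. \<bar>x j\<bar> * \<bar>\<phi> (mM a {j})\<bar>)" if d: "\<phi> \<in> bfs_dual L N" for \<phi>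
  proof -
    obtain K\<phi> where K\<phi>: "K\<phi> \<ge> 0" "\<forall>z\<in>L. \<bar>\<phi> z\<bar> \<le> K\<phi> * N z" using dual_bound[OF d] by blast
    define s where "s j = (if \<phi> (mM a {j}) \<ge> 0 then 1 else (-1::real))" for j
    have bnd: "(\<Sum>j<n. \<bar>x j\<bar> * \<bar>\<phi> (mM a {j})\<bar>) \<le> K\<phi> * (K2 * ellp_norm p x)" for n
    proof -
      define y where "y j = (if j < n then \<bar>x j\<bar> * s j else 0)" for j
      have z: "\<And>j. j \<notin> {..<n} \<Longrightarrow> y j = 0" unfolding y_def by auto
      have yle: "\<bar>y j\<bar> \<le> \<bar>x j\<bar>" for j unfolding y_def s_def by auto
      have yl: "y \<in> ellp p" and yn: "ellp_norm p y \<le> ellp_norm p x" using ellp_mono[OF x pp yle] by auto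
      have my: "matop a y = fsum a {..<n} y" by (rule fin_matop[OF _ z]) auto
      have "(\<Sum>j<n. \<bar>x j\<bar> * \<bar>\<phi> (mM a {j})\<bar>) = (\<Sum>j<n. y j * \<phi> (mM a {j}))"
        unfolding y_def s_def by (intro sum.cong) auto
      also have "\<dots> = \<phi> (matop a y)" unfolding my by (rule dual_fsum[OF d, symmetric]) auto
      also have "\<dots> \<le> K\<phi> * N (matop a y)" using K\<phi>(2) St yl by fastforce
      also have "\<dots> \<le> K\<phi> * (K2 * ellp_norm p y)" using K\<phi>(1) St yl by (intro mult_left_mono) auto
      also have "\<dots> \<le> K\<phi> * (K2 * ellp_norm p x)"
        using K\<phi>(1) K2 yn by (intro mult_left_mono) auto
      finally show ?thesis .
    qed
    show ?thesis by (rule summableI_nonneg_bounded[OF _ bnd]) auto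
  qed
  have part2: "\<exists>v\<in>L. \<forall>\<phi>\<in>bfs_dual L N. \<phi> v = (\<Sum>j. if j \<in> S then x j * \<phi> (mM a {j}) else 0)" for S
  proof -
    define xS where "xS j = (if j \<in> S then x j else 0)" for j
    have xSl: "xS \<in> ellp p" using ellp_mono[OF x pp, of xS] unfolding xS_def by auto
    have st: "matop a xS \<in> L" "(\<lambda>n. N (\<lambda>i. fsum a {..<n} xS i - matop a xS i)) \<longlonglongrightarrow> 0"
      using St xSl by auto
    have "\<phi> (matop a xS) = (\<Sum>j. if j \<in> S then x j * \<phi> (mM a {j}) else 0)" if d: "\<phi> \<in> bfs_dual L N" for \<phi>
    proof -
      obtain K\<phi> where K\<phi>: "K\<phi> \<ge> 0" "\<forall>z\<in>L. \<bar>\<phi> z\<bar> \<le> K\<phi> * N z" using dual_bound[OF d] by blast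
      have FL: "fsum a {..<n} xS \<in> L" for n by (rule fsum_in) auto
      have t: "(\<lambda>n. K\<phi> * N (\<lambda>i. fsum a {..<n} xS i - matop a xS i)) \<longlonglongrightarrow> 0"
        using tendsto_mult[OF tendsto_const st(2), of K\<phi>] by simp
      have ev: "eventually (\<lambda>n. norm (\<phi> (fsum a {..<n} xS) - \<phi> (matop a xS)) \<le> K\<phi> * N (\<lambda>i. fsum a {..<n} xS i - matop a xS i)) sequentially"
      proof (intro always_eventually allI)
        fix n
        have "\<phi> (fsum a {..<n} xS) - \<phi> (matop a xS) = \<phi> (\<lambda>i. fsum a {..<n} xS i - matop a xS i)"
          by (rule dual_diff[OF d FL st(1), symmetric])
        then show "norm (\<phi> (fsum a {..<n} xS) - \<phi> (matop a xS)) \<le> K\<phi> * N (\<lambda>i. fsum a {..<n} xS i - matop a xS i)"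
          using K\<phi>(2) diff_in[OF FL st(1), of n] by simp
      qed
      have "(\<lambda>n. \<phi> (fsum a {..<n} xS) - \<phi> (matop a xS)) \<longlonglongrightarrow> 0" by (rule Lim_null_comparison[OF ev t])
      then have "(\<lambda>n. (\<phi> (fsum a {..<n} xS) - \<phi> (matop a xS)) + \<phi> (matop a xS)) \<longlonglongrightarrow> 0 + \<phi> (matop a xS)"
        by (intro tendsto_add tendsto_const)
      then have "(\<lambda>n. \<phi> (fsum a {..<n} xS)) \<longlonglongrightarrow> \<phi> (matop a xS)" by simp
      moreover have "\<phi> (fsum a {..<n} xS) = (\<Sum>j<n. if j \<in> S then x j * \<phi> (mM a {j}) else 0)" for n
        unfolding dual_fsum[OF d finite_lessThan] xS_def by (intro sum.cong) auto
      ultimately have "(\<lambda>j. if j \<in> S then x j * \<phi> (mM a {j}) else 0) sums \<phi> (matop a xS)"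
        unfolding sums_def by simp
      then show ?thesis by (rule sums_unique)
    qed
    then show ?thesis using st(1) by blast
  qed
  show "x \<in> ell1_mM L N a" unfolding ell1_mM_def using part1 part2 by blast
qed

end


definition wv :: "(nat \<Rightarrow> nat \<Rightarrow> real) \<Rightarrow> seq \<Rightarrow> nat set \<Rightarrow> seq" where
  "wv a x S = (\<lambda>i. \<Sum>j. if j \<in> S then x j * a i j else 0)"

definition cyl :: "nat \<Rightarrow> nat set \<Rightarrow> nat set \<Rightarrow> bool" where
  "cyl m T S \<longleftrightarrow> (\<forall>j<m. j \<in> S \<longleftrightarrow> j \<in> T)"

lemma tail0:
  fixes g :: "nat \<Rightarrow> real"
  assumes g: "summable g"
  shows "(\<lambda>m. \<Sum>j. if j \<ge> m then g j else 0) \<longlonglongrightarrow> 0"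
proof -
  have eq: "(\<Sum>j. if j \<ge> m then g j else 0) = suminf g - (\<Sum>j<m. g j)" for m
  proof -
    have f: "summable (\<lambda>j. if j < m then g j else 0)" by (rule summable_finite[of "{..<m}"]) auto
    have s2: "(\<Sum>j. if j < m then g j else 0) = (\<Sum>j<m. g j)" by (subst suminf_finite[of "{..<m}"]) auto
    have "suminf g - (\<Sum>j. if j < m then g j else 0) = (\<Sum>j. g j - (if j < m then g j else 0))"
      by (rule suminf_diff[OF g f])
    also have "\<dots> = (\<Sum>j. if j \<ge> m then g j else 0)" by (rule arg_cong[where f=suminf]) auto
    finally show ?thesis using s2 by simp
  qed
  have "(\<lambda>m. suminf g - (\<Sum>j<m. g j)) \<longlonglongrightarrow> suminf g - suminf g"
    by (intro tendsto_diff tendsto_const summable_LIMSEQ[OF g])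
  then show ?thesis unfolding eq by simp
qed

context bctx begin

lemma lsc:
  assumes fat: "fatou L N" and Y: "\<And>l. Y l \<in> L" and Yb: "\<And>l. N (Y l) \<le> k"
    and conv: "\<And>i. (\<lambda>l. Y l i) \<longlonglongrightarrow> y i"
  shows "y \<in> L \<and> N y \<le> k"
proof -
  define Z where "Z r i = (INF l\<in>{r..}. \<bar>Y l i\<bar>)" for r i
  have bdd: "bdd_below ((\<lambda>l. \<bar>Y l i\<bar>) ` A)" for i A by (rule bdd_belowI[of _ 0]) auto
  have Z0: "0 \<le> Z r i" for r i unfolding Z_def by (rule cINF_greatest) auto
  have Zle: "Z r i \<le> \<bar>Y r i\<bar>" for r i unfolding Z_def by (rule cINF_lower[OF bdd]) auto
  have Zmono: "Z r i \<le> Z (Suc r) i" for r i unfolding Z_def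
    by (rule cINF_superset_mono[OF _ bdd]) auto
  have Zconv: "(\<lambda>r. Z r i) \<longlonglongrightarrow> \<bar>y i\<bar>" for i
  proof (rule LIMSEQ_I)
    fix e :: real assume e: "e > 0"
    have "(\<lambda>l. \<bar>Y l i\<bar>) \<longlonglongrightarrow> \<bar>y i\<bar>" by (intro tendsto_rabs conv)
    then obtain r0 where r0: "\<forall>l\<ge>r0. norm (\<bar>Y l i\<bar> - \<bar>y i\<bar>) < e / 2" using LIMSEQ_D[of _ _ "e/2"] e by fastforce
    have "norm (Z r i - \<bar>y i\<bar>) < e" if r: "r \<ge> r0" for r
    proof -
      have "\<bar>y i\<bar> - e / 2 \<le> Z r i" unfolding Z_def
      proof (rule cINF_greatest)
        fix l assume "l \<in> {r..}"
        then have "l \<ge> r0" using r by auto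
        then have "norm (\<bar>Y l i\<bar> - \<bar>y i\<bar>) < e / 2" using r0 by blast
        then show "\<bar>y i\<bar> - e / 2 \<le> \<bar>Y l i\<bar>" unfolding real_norm_def abs_less_iff by linarith
      qed auto
      moreover have "Z r i < \<bar>y i\<bar> + e / 2"
      proof -
        have "norm (\<bar>Y r i\<bar> - \<bar>y i\<bar>) < e / 2" using r0 r by blast
        then show ?thesis using Zle[of r i] unfolding real_norm_def abs_less_iff by linarith
      qed
      ultimately show ?thesis using e by auto
    qed
    then show "\<exists>no. \<forall>r\<ge>no. norm (Z r i - \<bar>y i\<bar>) < e" by blast
  qed
  have ZL: "Z r \<in> L" and ZN: "N (Z r) \<le> k" for r
  proof -
    have "Z r \<in> L \<and> N (Z r) \<le> N (Y r)" by (rule solid[OF Y]) (use Z0 Zle in auto)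
    then show "Z r \<in> L" "N (Z r) \<le> k" using Yb[of r] by auto
  qed
  have "(\<lambda>i. \<bar>y i\<bar>) \<in> L \<and> mono (\<lambda>r. N (Z r)) \<and> (\<lambda>r. N (Z r)) \<longlonglongrightarrow> N (\<lambda>i. \<bar>y i\<bar>)"
    using fat unfolding fatou_def
    apply (elim allE[of _ Z] allE[of _ "\<lambda>i. \<bar>y i\<bar>"])
    using ZL Z0 Zmono Zconv ZN by blast
  then have ya: "(\<lambda>i. \<bar>y i\<bar>) \<in> L" and yk: "N (\<lambda>i. \<bar>y i\<bar>) \<le> k"
    using LIMSEQ_le_const2[of "\<lambda>r. N (Z r)" _ k] ZN by auto
  have "y \<in> L \<and> N y \<le> N (\<lambda>i. \<bar>y i\<bar>)" by (rule solid[OF ya]) auto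
  then show ?thesis using yk by auto
qed

end

context mctx begin

lemma abs_mM:
  assumes ax: "(\<lambda>j. \<bar>x j\<bar>) \<in> ell1_mM L N a"
  shows "x \<in> ell1_mM L N a"
proof -
  have h1: "\<forall>\<phi>\<in>bfs_dual L N. summable (\<lambda>j. \<bar>x j\<bar> * \<bar>\<phi> (mM a {j})\<bar>)"
    using ax unfolding ell1_mM_def by auto
  have h2: "\<forall>S. \<exists>v\<in>L. \<forall>\<phi>\<in>bfs_dual L N. \<phi> v = (\<Sum>j. if j \<in> S then \<bar>x j\<bar> * \<phi> (mM a {j}) else 0)"
    using ax unfolding ell1_mM_def by auto
  have part2: "\<exists>v\<in>L. \<forall>\<phi>\<in>bfs_dual L N. \<phi> v = (\<Sum>j. if j \<in> S then x j * \<phi> (mM a {j}) else 0)" for S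
  proof -
    obtain v1 where v1: "v1 \<in> L" "\<forall>\<phi>\<in>bfs_dual L N. \<phi> v1 = (\<Sum>j. if j \<in> S \<inter> {j. x j \<ge> 0} then \<bar>x j\<bar> * \<phi> (mM a {j}) else 0)"
      using h2 by blast
    obtain v2 where v2: "v2 \<in> L" "\<forall>\<phi>\<in>bfs_dual L N. \<phi> v2 = (\<Sum>j. if j \<in> S \<inter> {j. x j < 0} then \<bar>x j\<bar> * \<phi> (mM a {j}) else 0)"
      using h2 by blast
    have "\<phi> (\<lambda>i. v1 i - v2 i) = (\<Sum>j. if j \<in> S then x j * \<phi> (mM a {j}) else 0)" if d: "\<phi> \<in> bfs_dual L N" for \<phi>
    proof -
      define f1 where "f1 j = (if j \<in> S \<inter> {j. x j \<ge> 0} then \<bar>x j\<bar> * \<phi> (mM a {j}) else 0)" for j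
      define f2 where "f2 j = (if j \<in> S \<inter> {j. x j < 0} then \<bar>x j\<bar> * \<phi> (mM a {j}) else 0)" for j
      have g: "summable (\<lambda>j. \<bar>x j\<bar> * \<bar>\<phi> (mM a {j})\<bar>)" using h1 d by blast
      have s1: "summable f1"
        by (rule summable_comparison_test[OF _ g]) (auto simp: f1_def abs_mult)
      have s2: "summable f2"
        by (rule summable_comparison_test[OF _ g]) (auto simp: f2_def abs_mult)
      have "\<phi> (\<lambda>i. v1 i - v2 i) = suminf f1 - suminf f2"
        using dual_diff[OF d v1(1) v2(1)] v1(2) v2(2) d unfolding f1_def f2_def by simp
      also have "\<dots> = (\<Sum>j. f1 j - f2 j)" by (rule suminf_diff[OF s1 s2])
      also have "\<dots> = (\<Sum>j. if j \<in> S then x j * \<phi> (mM a {j}) else 0)"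
        by (rule arg_cong[where f=suminf]) (auto simp: f1_def f2_def)
      finally show ?thesis .
    qed
    then show ?thesis using diff_in[OF v1(1) v2(1)] by blast
  qed
  show ?thesis unfolding ell1_mM_def using h1 part2 by auto
qed

lemma C_D: assumes C: "ellp p \<subseteq> ell1_mM L N a" shows "ell1 \<subseteq> ellr_mM (1 / p) L N a \<inter> ell1_mM L N a"
proof
  fix x assume x: "x \<in> ell1"
  have "x \<in> ellp p" using ell1_ellp[OF x] p by simp
  then have x1: "x \<in> ell1_mM L N a" using C by auto
  have "(\<lambda>j. \<bar>x j\<bar> powr (1/p)) \<in> ellp p"
  proof -
    have "\<bar>\<bar>x j\<bar> powr (1/p)\<bar> powr p = \<bar>x j\<bar>" for j using p by (simp add: powr_powr)
    then show ?thesis using x unfolding ellp_def ell1_def by simp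
  qed
  then have "x \<in> ellr_mM (1 / p) L N a" using C unfolding ellr_mM_def by auto
  then show "x \<in> ellr_mM (1 / p) L N a \<inter> ell1_mM L N a" using x1 by auto
qed

lemma D_C: assumes D: "ell1 \<subseteq> ellr_mM (1 / p) L N a \<inter> ell1_mM L N a" shows "ellp p \<subseteq> ell1_mM L N a"
proof
  fix y assume y: "y \<in> ellp p"
  have "(\<lambda>j. \<bar>y j\<bar> powr p) \<in> ell1" using y unfolding ellp_def ell1_def by simp
  then have "(\<lambda>j. \<bar>\<bar>y j\<bar> powr p\<bar> powr (1/p)) \<in> ell1_mM L N a" using D unfolding ellr_mM_def by auto
  moreover have "\<bar>\<bar>y j\<bar> powr p\<bar> powr (1/p) = \<bar>y j\<bar>" for j using p by (simp add: powr_powr)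
  ultimately have "(\<lambda>j. \<bar>y j\<bar>) \<in> ell1_mM L N a" by simp
  then show "y \<in> ell1_mM L N a" by (rule abs_mM)
qed

end


lemma cyl_mono: "m \<le> m' \<Longrightarrow> cyl m' T S \<Longrightarrow> cyl m T S" unfolding cyl_def by auto
lemma cyl_self: "cyl m T T" unfolding cyl_def by auto

context mctx begin

lemma C_tail:
  assumes fat: "fatou L N" and x: "x \<in> ell1_mM L N a"
  shows "\<exists>m k. \<forall>S. S \<subseteq> {m..} \<longrightarrow> N (wv a x S) \<le> k"
proof -
  have h1: "\<forall>\<phi>\<in>bfs_dual L N. summable (\<lambda>j. \<bar>x j\<bar> * \<bar>\<phi> (mM a {j})\<bar>)"
    using x unfolding ell1_mM_def by auto
  have h2: "\<forall>S. \<exists>v\<in>L. \<forall>\<phi>\<in>bfs_dual L N. \<phi> v = (\<Sum>j. if j \<in> S then x j * \<phi> (mM a {j}) else 0)"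
    using x unfolding ell1_mM_def by auto
  have gs: "summable (\<lambda>j. \<bar>x j\<bar> * \<bar>a i j\<bar>)" for i
    using bspec[OF h1 coord_dual[of i]] by (simp add: mM_single)
  have wL: "wv a x S \<in> L" for S
  proof -
    obtain v where v: "v \<in> L" "\<forall>\<phi>\<in>bfs_dual L N. \<phi> v = (\<Sum>j. if j \<in> S then x j * \<phi> (mM a {j}) else 0)"
      using h2 by blast
    have "v = wv a x S"
    proof
      fix i show "v i = wv a x S i" using bspec[OF v(2) coord_dual[of i]] unfolding wv_def mM_single by simp
    qed
    then show ?thesis using v(1) by simp
  qed
  have sumS: "summable (\<lambda>j. if j \<in> S then x j * a i j else 0)" for S i
    by (rule summable_comparison_test[OF _ gs[of i]]) (auto simp: abs_mult)
  have sumT: "summable (\<lambda>j. if j \<ge> m then \<bar>x j\<bar> * \<bar>a i j\<bar> else 0)" for m i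
    by (rule summable_comparison_test[OF _ gs[of i]]) auto
  have approx: "\<bar>wv a x S i - wv a x T i\<bar> \<le> (\<Sum>j. if j \<ge> m then \<bar>x j\<bar> * \<bar>a i j\<bar> else 0)"
    if c: "cyl m T S" for m T S i
  proof -
    define h where "h j = (if j \<in> S then x j * a i j else 0) - (if j \<in> T then x j * a i j else 0)" for j
    have eq: "wv a x S i - wv a x T i = suminf h" unfolding wv_def h_def by (rule suminf_diff[OF sumS sumS])
    have sh: "summable h" unfolding h_def by (intro summable_diff sumS)
    have hb: "\<bar>h j\<bar> \<le> (if j \<ge> m then \<bar>x j\<bar> * \<bar>a i j\<bar> else 0)" for j
      using c unfolding cyl_def h_def by (auto simp: abs_mult)
    have "suminf h \<le> (\<Sum>j. if j \<ge> m then \<bar>x j\<bar> * \<bar>a i j\<bar> else 0)"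
      by (rule suminf_le[OF _ sh sumT]) (use hb in \<open>auto simp: abs_le_iff\<close>)
    moreover have "(\<Sum>j. - h j) \<le> (\<Sum>j. if j \<ge> m then \<bar>x j\<bar> * \<bar>a i j\<bar> else 0)"
      by (rule suminf_le[OF _ summable_minus[OF sh] sumT]) (use hb in \<open>auto simp: abs_le_iff\<close>)
    moreover have "(\<Sum>j. - h j) = - suminf h" by (rule suminf_minus[OF sh])
    ultimately show ?thesis unfolding eq by linarith
  qed
  have conv: "(\<lambda>l. wv a x (S' l) i) \<longlonglongrightarrow> wv a x S i" if c: "\<And>l. cyl l S (S' l)" for S S' i
  proof -
    have ev: "eventually (\<lambda>l. norm (wv a x (S' l) i - wv a x S i) \<le> (\<Sum>j. if j \<ge> l then \<bar>x j\<bar> * \<bar>a i j\<bar> else 0)) sequentially"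
      by (intro always_eventually allI) (use approx[OF c] in simp)
    have "(\<lambda>l. wv a x (S' l) i - wv a x S i) \<longlonglongrightarrow> 0"
      by (rule Lim_null_comparison[OF ev tail0[OF gs]])
    then have "(\<lambda>l. (wv a x (S' l) i - wv a x S i) + wv a x S i) \<longlonglongrightarrow> 0 + wv a x S i"
      by (intro tendsto_add tendsto_const)
    then show ?thesis by simp
  qed
  have main: "\<exists>m T k. \<forall>S. cyl m T S \<longrightarrow> N (wv a x S) \<le> k"
  proof (rule ccontr)
    assume "\<not> ?thesis"
    then have H: "\<forall>m T k. \<exists>S. cyl m T S \<and> N (wv a x S) > k" by (auto simp: not_le)
    have step: "\<exists>m' T'. m' > m \<and> (\<forall>S. cyl m' T' S \<longrightarrow> cyl m T S) \<and> (\<forall>S. cyl m' T' S \<longrightarrow> N (wv a x S) > k)"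
      for m T k
    proof -
      obtain S where S: "cyl m T S" "N (wv a x S) > k" using H by blast
      have "\<exists>m'>m. \<forall>S'. cyl m' S S' \<longrightarrow> N (wv a x S') > k"
      proof (rule ccontr)
        assume "\<not> ?thesis"
        then have nn: "\<forall>m'. m' \<le> m \<or> (\<exists>S'. cyl m' S S' \<and> N (wv a x S') \<le> k)" by (auto simp: not_less)
        have "\<forall>l. \<exists>S'. cyl (l + m + 1) S S' \<and> N (wv a x S') \<le> k"
        proof
          fix l show "\<exists>S'. cyl (l + m + 1) S S' \<and> N (wv a x S') \<le> k" using nn[rule_format, of "l + m + 1"] by auto
        qed
        then obtain S' where S': "\<And>l. cyl (l + m + 1) S (S' l)" "\<And>l. N (wv a x (S' l)) \<le> k"
          using choice[of "\<lambda>l S'. cyl (l + m + 1) S S' \<and> N (wv a x S') \<le> k"] by blast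
        have c: "cyl l S (S' l)" for l by (rule cyl_mono[OF _ S'(1)[of l]]) simp
        have "wv a x S \<in> L \<and> N (wv a x S) \<le> k"
          by (rule lsc[OF fat wL S'(2) conv[OF c]])
        then show False using S(2) by simp
      qed
      then obtain m' where m': "m' > m" "\<forall>S'. cyl m' S S' \<longrightarrow> N (wv a x S') > k" by blast
      have "\<forall>S'. cyl m' S S' \<longrightarrow> cyl m T S'" using m'(1) S(1) unfolding cyl_def by auto
      then show ?thesis using m' by blast
    qed
    define st where "st = rec_nat (0::nat, {}::nat set) (\<lambda>n q. SOME q'. fst q' > fst q \<and>
       (\<forall>S. cyl (fst q') (snd q') S \<longrightarrow> cyl (fst q) (snd q) S) \<and>
       (\<forall>S. cyl (fst q') (snd q') S \<longrightarrow> N (wv a x S) > real n))"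
    have stS: "st (Suc n) = (SOME q'. fst q' > fst (st n) \<and>
       (\<forall>S. cyl (fst q') (snd q') S \<longrightarrow> cyl (fst (st n)) (snd (st n)) S) \<and>
       (\<forall>S. cyl (fst q') (snd q') S \<longrightarrow> N (wv a x S) > real n))" for n
      unfolding st_def by simp
    have P: "fst (st (Suc n)) > fst (st n) \<and>
       (\<forall>S. cyl (fst (st (Suc n))) (snd (st (Suc n))) S \<longrightarrow> cyl (fst (st n)) (snd (st n)) S) \<and>
       (\<forall>S. cyl (fst (st (Suc n))) (snd (st (Suc n))) S \<longrightarrow> N (wv a x S) > real n)" for n
      unfolding stS
    proof (rule someI_ex)
      obtain m' T' where "m' > fst (st n)" "\<forall>S. cyl m' T' S \<longrightarrow> cyl (fst (st n)) (snd (st n)) S"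
        "\<forall>S. cyl m' T' S \<longrightarrow> N (wv a x S) > real n"
        using step[of "fst (st n)" "snd (st n)" "real n"] by blast
      then show "\<exists>q'. fst q' > fst (st n) \<and>
       (\<forall>S. cyl (fst q') (snd q') S \<longrightarrow> cyl (fst (st n)) (snd (st n)) S) \<and>
       (\<forall>S. cyl (fst q') (snd q') S \<longrightarrow> N (wv a x S) > real n)"
        by (intro exI[of _ "(m', T')"]) simp
    qed
    define M where "M n = fst (st n)" for n
    define T where "T n = snd (st n)" for n
    have sm: "strict_mono M" unfolding strict_mono_Suc_iff M_def using P by blast
    have Mge: "n \<le> M n" for n by (rule seq_suble[OF sm])
    have chain: "\<forall>S. cyl (M n') (T n') S \<longrightarrow> cyl (M n) (T n) S" if "n \<le> n'" for n n'
      using that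
    proof (induction n' rule: dec_induct)
      case base then show ?case by simp
    next
      case (step k)
      then show ?case using P[of k] unfolding M_def T_def by blast
    qed
    define Sst where "Sst = {j. j \<in> T (Suc j)}"
    have cS: "cyl (M n) (T n) Sst" for n
      unfolding cyl_def
    proof (intro allI impI)
      fix j assume j: "j < M n"
      define n' where "n' = max n (Suc j)"
      have le1: "n \<le> n'" unfolding n'_def by simp
      have c1: "cyl (M n) (T n) (T n')" using chain[OF le1] cyl_self by blast
      have 1: "j \<in> T n' \<longleftrightarrow> j \<in> T n" using c1 j unfolding cyl_def by blast
      have le2: "Suc j \<le> n'" unfolding n'_def by simp
      have c2: "cyl (M (Suc j)) (T (Suc j)) (T n')" using chain[OF le2] cyl_self by blast
      have "j < M (Suc j)" using Mge[of "Suc j"] by simp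
      then have 2: "j \<in> T n' \<longleftrightarrow> j \<in> T (Suc j)" using c2 unfolding cyl_def by blast
      show "j \<in> Sst \<longleftrightarrow> j \<in> T n" unfolding Sst_def using 1 2 by auto
    qed
    have big: "N (wv a x Sst) > real n" for n
      using P[of n] cS[of "Suc n"] unfolding M_def T_def by blast
    obtain n where "N (wv a x Sst) < real n" using reals_Archimedean2 by blast
    then show False using big[of n] by simp
  qed
  then obtain m T k where b: "\<And>S. cyl m T S \<Longrightarrow> N (wv a x S) \<le> k" by blast
  have "N (wv a x S) \<le> 2 * k" if S: "S \<subseteq> {m..}" for S
  proof -
    define T' where "T' = T \<inter> {..<m}"
    have c1: "cyl m T (S \<union> T')" using S unfolding cyl_def T'_def by auto
    have c2: "cyl m T T'" unfolding cyl_def T'_def by auto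
    have eq: "wv a x S = (\<lambda>i. wv a x (S \<union> T') i - wv a x T' i)"
    proof
      fix i
      have "wv a x (S \<union> T') i - wv a x T' i =
        (\<Sum>j. (if j \<in> S \<union> T' then x j * a i j else 0) - (if j \<in> T' then x j * a i j else 0))"
        unfolding wv_def by (rule suminf_diff[OF sumS sumS])
      also have "\<dots> = wv a x S i" unfolding wv_def
        by (rule arg_cong[where f=suminf], rule ext) (use S in \<open>auto simp: T'_def subset_iff\<close>)
      finally show "wv a x S i = wv a x (S \<union> T') i - wv a x T' i" by simp
    qed
    have "N (wv a x S) \<le> N (wv a x (S \<union> T')) + N (wv a x T')"
      unfolding eq by (rule N_tri_diff[OF wL wL])
    then show ?thesis using b[OF c1] b[OF c2] by simp
  qed
  then show ?thesis by blast
qed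

end


context mctx begin

lemma hump:
  assumes notE: "\<not> (\<exists>K>0. \<forall>F x. finite F \<longrightarrow> (\<forall>j\<in>F. 0 \<le> x j) \<longrightarrow>
                N (\<lambda>i. \<Sum>j\<in>F. x j * a i j) \<le> K * (\<Sum>j\<in>F. x j powr p) powr (1 / p))"
    and K0: "\<forall>j. N (col a j) \<le> K0" and K0n: "K0 \<ge> 0"
  shows "\<exists>F y. finite F \<and> F \<subseteq> {m..} \<and> (\<forall>j\<in>F. 0 \<le> y j) \<and> (\<Sum>j\<in>F. y j powr p) \<le> (1/2)^n
            \<and> N (fsum a F y) > real n"
proof -
  define K where "K = (real n + 1) * 2^n + K0 * real m + 1"
  have Kp: "K > 0" unfolding K_def using K0n by (simp add: add_pos_nonneg)
  obtain F x where F: "finite F" and x: "\<forall>j\<in>F. 0 \<le> x j"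
    and big: "N (fsum a F x) > K * (\<Sum>j\<in>F. x j powr p) powr (1 / p)"
    using notE Kp unfolding fsum_def by (auto simp: not_le)
  define Sx where "Sx = (\<Sum>j\<in>F. x j powr p)"
  define s where "s = Sx powr (1/p)"
  have Sx0: "Sx \<ge> 0" unfolding Sx_def by (intro sum_nonneg) auto
  have s0: "s \<ge> 0" unfolding s_def by simp
  have pne: "p \<noteq> 0" using p by simp
  have xle: "x j \<le> s" if j: "j \<in> F" for j
  proof -
    have "x j = (x j powr p) powr (1/p)" using pne x j by (simp add: powr_powr)
    also have "\<dots> \<le> s" unfolding s_def Sx_def using p F j
      by (intro powr_mono2 member_le_sum) auto
    finally show ?thesis .
  qed
  have spos: "s > 0"
  proof (rule ccontr)
    assume "\<not> s > 0"
    then have "s = 0" using s0 by simp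
    then have "\<forall>j\<in>F. x j = 0" using xle x by force
    then have "fsum a F x = (\<lambda>i. 0)" unfolding fsum_def by auto
    then show False using big \<open>s = 0\<close> N_zero unfolding s_def Sx_def by simp
  qed
  define F1 where "F1 = F \<inter> {m..}"
  define F2 where "F2 = F - {m..}"
  have F1: "finite F1" and F2: "finite F2" using F unfolding F1_def F2_def by auto
  have split: "fsum a F x = (\<lambda>i. fsum a F1 x i + fsum a F2 x i)"
    unfolding fsum_def F1_def F2_def by (rule ext, rule sum.Int_Diff[OF F])
  have n1: "N (fsum a F x) \<le> N (fsum a F1 x) + N (fsum a F2 x)"
    unfolding split by (rule N_tri[OF fsum_in[OF F1] fsum_in[OF F2]])
  have "N (fsum a F2 x) \<le> (\<Sum>j\<in>F2. \<bar>x j\<bar> * N (col a j))" by (rule fsum_N[OF F2])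
  also have "\<dots> \<le> (\<Sum>j\<in>F2. s * K0)"
  proof (rule sum_mono)
    fix j assume j: "j \<in> F2"
    then have "j \<in> F" unfolding F2_def by auto
    then have "\<bar>x j\<bar> \<le> s" using xle x by auto
    moreover have "0 \<le> N (col a j)" using N_nonneg cols_in by auto
    ultimately show "\<bar>x j\<bar> * N (col a j) \<le> s * K0" using K0 s0 by (intro mult_mono) auto
  qed
  also have "\<dots> = real (card F2) * (s * K0)" by simp
  also have "\<dots> \<le> real m * (s * K0)"
  proof -
    have "F2 \<subseteq> {..<m}" unfolding F2_def by auto
    then have "card F2 \<le> m" using card_mono[of "{..<m}" F2] by simp
    then show ?thesis using s0 K0n by (intro mult_right_mono) auto
  qed
  finally have n2: "N (fsum a F2 x) \<le> real m * (s * K0)" .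
  have big2: "N (fsum a F1 x) > ((real n + 1) * 2^n + 1) * s"
  proof -
    have "K * s = ((real n + 1) * 2^n + 1) * s + real m * (s * K0)" unfolding K_def by (simp add: algebra_simps)
    then show ?thesis using big n1 n2 unfolding s_def Sx_def by linarith
  qed
  define c where "c = (1/2)^n / s"
  have cpos: "c > 0" unfolding c_def using spos by simp
  have cs: "c * s = (1/2)^n" unfolding c_def using spos by simp
  define y where "y j = c * x j" for j
  have fy: "fsum a F1 y = (\<lambda>i. c * fsum a F1 x i)" unfolding fsum_def y_def
    by (auto simp: sum_distrib_left mult.assoc)
  have "N (fsum a F1 y) = c * N (fsum a F1 x)" unfolding fy using N_smult[OF fsum_in[OF F1], of c] cpos by simp
  also have "\<dots> > c * (((real n + 1) * 2^n + 1) * s)" using big2 cpos by simp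
  finally have "N (fsum a F1 y) > ((real n + 1) * 2^n + 1) * (c * s)" by (simp add: algebra_simps)
  also have "((real n + 1) * 2^n + 1) * (c * s) = (real n + 1) + (1/2)^n" unfolding cs
    by (simp add: algebra_simps power_one_over)
  finally have Ny0: "N (fsum a F1 y) > real n + 1 + (1/2)^n" .
  have "(0::real) \<le> (1/2)^n" by simp
  then have Ny: "N (fsum a F1 y) > real n" using Ny0 by linarith
  have "(\<Sum>j\<in>F1. y j powr p) = c powr p * (\<Sum>j\<in>F1. x j powr p)"
    unfolding y_def by (simp add: powr_mult sum_distrib_left)
  also have "\<dots> \<le> c powr p * Sx" unfolding Sx_def F1_def using F
    by (intro mult_left_mono sum_mono2) auto
  also have "Sx = s powr p" unfolding s_def using Sx0 pne by (simp add: powr_powr)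
  also have "c powr p * s powr p = ((1/2)^n) powr p" using cs by (simp add: powr_mult[symmetric])
  also have "\<dots> \<le> (1/2)^n" using p by (intro powr_le_one_le) (auto simp: power_le_one)
  finally have Sy: "(\<Sum>j\<in>F1. y j powr p) \<le> (1/2)^n" .
  have "\<forall>j\<in>F1. 0 \<le> y j" unfolding y_def F1_def using x cpos by auto
  moreover have "F1 \<subseteq> {m..}" unfolding F1_def by auto
  ultimately show ?thesis using F1 Sy Ny by blast
qed

end


context mctx begin

lemma blocks:
  assumes Q: "\<forall>m n. \<exists>F y. finite F \<and> F \<subseteq> {m..} \<and> (\<forall>j\<in>F. 0 \<le> y j) \<and> (\<Sum>j\<in>F. y j powr p) \<le> (1/2)^n
            \<and> N (fsum a F y) > real n"
  shows "\<exists>x. x \<in> ellp p \<and> (\<forall>n. \<exists>F. finite F \<and> F \<subseteq> {n..} \<and> N (fsum a F x) > real n)"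
proof -
  define R where "R m n F y \<longleftrightarrow> finite F \<and> F \<subseteq> {m..} \<and> (\<forall>j\<in>F. 0 \<le> y j) \<and> (\<Sum>j\<in>F. y j powr p) \<le> (1/2)^n
            \<and> N (fsum a F y) > real n" for m n F and y :: seq
  define q where "q m n = (SOME q. R m n (fst q) (snd q))" for m n
  have Rq: "R m n (fst (q m n)) (snd (q m n))" for m n
    unfolding q_def
  proof (rule someI_ex)
    have "\<exists>F y. R m n F y" unfolding R_def by (rule Q[rule_format])
    then obtain F y where Fy: "R m n F y" by blast
    show "\<exists>q. R m n (fst q) (snd q)" by (rule exI[of _ "(F, y)"]) (simp only: fst_conv snd_conv Fy)
  qed
  define Fg where "Fg m n = fst (q m n)" for m n
  define yg where "yg m n = snd (q m n)" for m n
  have G: "R m n (Fg m n) (yg m n)" for m n using Rq unfolding Fg_def yg_def .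
  define M where "M = rec_nat 0 (\<lambda>n Mn. Max (insert Mn (Fg Mn n)) + 1)"
  have M0: "M 0 = 0" unfolding M_def by simp
  have MS: "M (Suc n) = Max (insert (M n) (Fg (M n) n)) + 1" for n unfolding M_def by simp
  define Fb where "Fb n = Fg (M n) n" for n
  define yb where "yb n = yg (M n) n" for n
  have Rb: "R (M n) n (Fb n) (yb n)" for n unfolding Fb_def yb_def by (rule G)
  have finb: "finite (Fb n)" for n using Rb[of n] unfolding R_def by blast
  have Mlt: "M n < M (Suc n)" for n
  proof -
    have "M n \<le> Max (insert (M n) (Fg (M n) n))" using finb[of n] unfolding Fb_def by (intro Max_ge) auto
    then show ?thesis unfolding MS by simp
  qed
  have sm: "strict_mono M" unfolding strict_mono_Suc_iff using Mlt by blast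
  have Mge: "n \<le> M n" for n by (rule seq_suble[OF sm])
  have Fb_sub: "Fb n \<subseteq> {M n..<M (Suc n)}" for n
  proof
    fix j assume j: "j \<in> Fb n"
    have "M n \<le> j" using Rb[of n] j unfolding R_def by auto
    moreover have "j \<le> Max (insert (M n) (Fg (M n) n))" using finb[of n] j unfolding Fb_def by (intro Max_ge) auto
    ultimately show "j \<in> {M n..<M (Suc n)}" unfolding MS by simp
  qed
  have uniq: "k = n" if "M n \<le> j" "j < M (Suc n)" "M k \<le> j" "j < M (Suc k)" for n k j
  proof (rule ccontr)
    assume "k \<noteq> n"
    then consider "k < n" | "n < k" by linarith
    then show False
    proof cases
      case 1
      then have "M (Suc k) \<le> M n" using strict_mono_less_eq[OF sm, of "Suc k" n] by simp
      then show False using that by simp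
    next
      case 2
      then have "M (Suc n) \<le> M k" using strict_mono_less_eq[OF sm, of "Suc n" k] by simp
      then show False using that by simp
    qed
  qed
  define x where "x j = (\<Sum>k\<in>{..j}. if j \<in> Fb k then yb k j else 0)" for j
  have xblock: "x j = (if j \<in> Fb n then yb n j else 0)" if j: "M n \<le> j" "j < M (Suc n)" for n j
  proof -
    have "x j = (\<Sum>k\<in>{..j}. if k = n then (if j \<in> Fb n then yb n j else 0) else 0)"
      unfolding x_def
    proof (rule sum.cong)
      fix k assume "k \<in> {..j}"
      show "(if j \<in> Fb k then yb k j else 0) = (if k = n then (if j \<in> Fb n then yb n j else 0) else 0)"
      proof (cases "j \<in> Fb k")
        case True
        then have "k = n" using uniq[OF j, of k] Fb_sub[of k] by auto
        then show ?thesis by simp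
      qed auto
    qed simp
    also have "\<dots> = (if j \<in> Fb n then yb n j else 0)" using Mge[of n] j by (simp add: sum.delta)
    finally show ?thesis .
  qed
  have ybn: "j \<in> Fb k \<Longrightarrow> 0 \<le> yb k j" for j k using Rb[of k] unfolding R_def by blast
  have x0: "0 \<le> x j" for j unfolding x_def using ybn by (intro sum_nonneg) auto
  have blocksum: "(\<Sum>j\<in>{M n..<M (Suc n)}. \<bar>x j\<bar> powr p) = (\<Sum>j\<in>Fb n. yb n j powr p)" for n
  proof -
    have "(\<Sum>j\<in>{M n..<M (Suc n)}. \<bar>x j\<bar> powr p) = (\<Sum>j\<in>{M n..<M (Suc n)}. if j \<in> Fb n then yb n j powr p else 0)"
    proof (rule sum.cong)
      fix j assume "j \<in> {M n..<M (Suc n)}"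
      then have "x j = (if j \<in> Fb n then yb n j else 0)" by (intro xblock) auto
      then show "\<bar>x j\<bar> powr p = (if j \<in> Fb n then yb n j powr p else 0)" using x0[of j] by simp
    qed simp
    also have "\<dots> = (\<Sum>j\<in>{M n..<M (Suc n)} \<inter> Fb n. yb n j powr p)" by (simp add: sum.inter_restrict)
    also have "{M n..<M (Suc n)} \<inter> Fb n = Fb n" using Fb_sub[of n] by auto
    finally show ?thesis .
  qed
  have psum: "(\<Sum>j<M n. \<bar>x j\<bar> powr p) \<le> 2 - 2 * (1/2)^n" for n
  proof (induction n)
    case 0 then show ?case using M0 by simp
  next
    case (Suc n)
    have "(\<Sum>j<M (Suc n). \<bar>x j\<bar> powr p) = (\<Sum>j<M n. \<bar>x j\<bar> powr p) + (\<Sum>j\<in>{M n..<M (Suc n)}. \<bar>x j\<bar> powr p)"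
      using sum_diff_nat_ivl[of 0 "M n" "M (Suc n)" "\<lambda>j. \<bar>x j\<bar> powr p"] Mlt[of n]
      by (simp add: atLeast0LessThan)
    also have "\<dots> \<le> 2 - 2 * (1/2)^n + (1/2)^n"
    proof -
      have "(\<Sum>j\<in>Fb n. yb n j powr p) \<le> (1/2)^n" using Rb[of n] unfolding R_def by blast
      then show ?thesis using Suc blocksum[of n] by linarith
    qed
    also have "\<dots> = 2 - 2 * (1/2)^(Suc n)" by simp
    finally show ?case .
  qed
  have bnd2: "(\<Sum>j<n. \<bar>x j\<bar> powr p) \<le> 2" for n
  proof -
    have "(\<Sum>j<n. \<bar>x j\<bar> powr p) \<le> (\<Sum>j<M n. \<bar>x j\<bar> powr p)"
      using Mge[of n] by (intro sum_mono2) auto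
    also have "\<dots> \<le> 2" using psum[of n] zero_le_power[of "1/2::real" n] by linarith
    finally show ?thesis .
  qed
  have "summable (\<lambda>i. \<bar>x i\<bar> powr p)" by (rule summableI_nonneg_bounded[OF _ bnd2]) auto
  then have xl: "x \<in> ellp p" unfolding ellp_def by simp
  have "\<exists>F. finite F \<and> F \<subseteq> {n..} \<and> N (fsum a F x) > real n" for n
  proof -
    have "fsum a (Fb n) x = fsum a (Fb n) (yb n)" unfolding fsum_def
    proof (rule ext, rule sum.cong)
      fix i j assume j: "j \<in> Fb n"
      then have "x j = yb n j" using xblock[of n j] Fb_sub[of n] by auto
      then show "x j * a i j = yb n j * a i j" by simp
    qed simp
    moreover have "Fb n \<subseteq> {n..}" using Fb_sub[of n] Mge[of n] by auto
    moreover have "N (fsum a (Fb n) (yb n)) > real n" "finite (Fb n)" using Rb[of n] unfolding R_def by blast+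
    ultimately show ?thesis by (intro exI[of _ "Fb n"]) simp
  qed
  then show ?thesis using xl by blast
qed

lemma C_E:
  assumes fat: "fatou L N" and C: "ellp p \<subseteq> ell1_mM L N a"
    and K0: "\<forall>j. N (col a j) \<le> K0" and K0n: "K0 \<ge> 0"
  shows "\<exists>K>0. \<forall>F x. finite F \<longrightarrow> (\<forall>j\<in>F. 0 \<le> x j) \<longrightarrow>
                N (\<lambda>i. \<Sum>j\<in>F. x j * a i j) \<le> K * (\<Sum>j\<in>F. x j powr p) powr (1 / p)"
proof (rule ccontr)
  assume notE: "\<not> ?thesis"
  have "\<forall>m n. \<exists>F y. finite F \<and> F \<subseteq> {m..} \<and> (\<forall>j\<in>F. 0 \<le> y j) \<and> (\<Sum>j\<in>F. y j powr p) \<le> (1/2)^n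
            \<and> N (fsum a F y) > real n"
    using hump[OF notE K0 K0n] by blast
  from blocks[OF this] obtain x where x: "x \<in> ellp p" and xb: "\<forall>n. \<exists>F. finite F \<and> F \<subseteq> {n..} \<and> N (fsum a F x) > real n"
    by blast
  have "x \<in> ell1_mM L N a" using x C by auto
  then obtain m k where mk: "\<forall>S. S \<subseteq> {m..} \<longrightarrow> N (wv a x S) \<le> k" using C_tail[OF fat] by blast
  define n where "n = max m (nat \<lceil>k\<rceil>)"
  obtain F where F: "finite F" "F \<subseteq> {n..}" "N (fsum a F x) > real n" using xb by blast
  have "F \<subseteq> {m..}" using F(2) unfolding n_def by auto
  then have "N (wv a x F) \<le> k" using mk by blast
  moreover have "wv a x F = fsum a F x" unfolding wv_def fsum_def
    by (rule ext, subst suminf_finite[OF F(1)]) auto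
  moreover have "k \<le> real n" unfolding n_def using real_nat_ceiling_ge[of k] by linarith
  ultimately show False using F(3) by simp
qed

end


lemma fs_ellp_gen:
  assumes pp: "p > 0" and h: "\<exists>F::nat set. finite F \<and> (\<forall>j. j \<notin> F \<longrightarrow> y j = 0)"
  shows "y \<in> ellp p"
proof -
  obtain F where F: "finite F" "\<forall>j. j \<notin> F \<longrightarrow> y j = 0" using h by blast
  have z: "\<And>j. j \<notin> F \<Longrightarrow> y j = 0" using F(2) by blast
  show ?thesis using ellp_finite_support(1)[OF F(1) z pp] .
qed

lemma fs_ell1_gen:
  assumes h: "\<exists>F::nat set. finite F \<and> (\<forall>j. j \<notin> F \<longrightarrow> y j = 0)"
  shows "y \<in> ell1"
proof -
  obtain F where F: "finite F" "\<forall>j. j \<notin> F \<longrightarrow> y j = 0" using h by blast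
  have z: "\<And>j. j \<notin> F \<Longrightarrow> \<bar>y j\<bar> = 0" using F(2) by simp
  have "summable (\<lambda>i. \<bar>y i\<bar>)" by (rule summable_finite[OF F(1) z])
  then show ?thesis unfolding ell1_def by simp
qed


theorem proposition7p9:
  fixes L :: "seq set" and N :: "seq \<Rightarrow> real"
    and a :: "nat \<Rightarrow> nat \<Rightarrow> real" and p :: real
  assumes bfs: "bfs L N" and fat: "fatou L N"
    and l1_sub: "ell1 \<subseteq> L"
    and cols_nz: "\<forall>j. col a j \<noteq> (\<lambda>i. 0)"
    and cols_in: "\<forall>j. col a j \<in> L"
    and cols_bdd: "\<exists>K. \<forall>j. N (col a j) \<le> K"
    and p: "p > 1"
  defines "A \<equiv> (\<forall>x\<in>ellp p. \<forall>i. summable (\<lambda>j. a i j * x j)) \<and>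
                (\<forall>x\<in>ellp p. matop a x \<in> L) \<and>
                (\<exists>K. \<forall>x\<in>ellp p. N (matop a x) \<le> K * ellp_norm p x)"
    and "B \<equiv> (\<exists>T. (\<forall>x\<in>ellp p. T x \<in> L) \<and>
                   (\<forall>x\<in>ellp p. \<forall>y\<in>ellp p. T (\<lambda>i. x i + y i) = (\<lambda>i. T x i + T y i)) \<and>
                   (\<forall>c. \<forall>x\<in>ellp p. T (\<lambda>i. c * x i) = (\<lambda>i. c * T x i)) \<and>
                   (\<exists>K. \<forall>x\<in>ellp p. N (T x) \<le> K * ellp_norm p x) \<and>
                   (\<forall>x\<in>ell1. T x = matop a x))"
    and "C \<equiv> ellp p \<subseteq> ell1_mM L N a"
    and "D \<equiv> ell1 \<subseteq> ellr_mM (1 / p) L N a \<inter> ell1_mM L N a"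
    and "E \<equiv> (\<exists>K>0. \<forall>F x. finite F \<longrightarrow> (\<forall>j\<in>F. 0 \<le> x j) \<longrightarrow>
                N (\<lambda>i. \<Sum>j\<in>F. x j * a i j) \<le> K * (\<Sum>j\<in>F. x j powr p) powr (1 / p))"
  shows "(A \<longleftrightarrow> B) \<and> (A \<longleftrightarrow> C) \<and> (A \<longleftrightarrow> D) \<and> (A \<longleftrightarrow> E)"
proof -
  have "mctx L N a p" unfolding mctx_def mctx_axioms_def bctx_def using bfs l1_sub cols_in p by auto
  then interpret mctx L N a p .
  have pp: "p > 0" using p by simp
  obtain K0 where K0: "\<forall>j. N (col a j) \<le> K0" using cols_bdd by blast
  have K0'': "N (col a j) \<le> max K0 0" for j using K0 by (simp add: le_max_iff_disj)
  have K0': "\<forall>j. N (col a j) \<le> max K0 0" using K0'' by blast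
  have fs_ellp: "y \<in> ellp p" if "\<exists>F::nat set. finite F \<and> (\<forall>j. j \<notin> F \<longrightarrow> y j = 0)" for y
    by (rule fs_ellp_gen[OF pp that])
  have fs_ell1: "y \<in> ell1" if "\<exists>F::nat set. finite F \<and> (\<forall>j. j \<notin> F \<longrightarrow> y j = 0)" for y
    by (rule fs_ell1_gen[OF that])
  have AE: "E" if "A"
  proof -
    obtain K where K: "\<forall>x\<in>ellp p. N (matop a x) \<le> K * ellp_norm p x" using \<open>A\<close> unfolding A_def by blast
    show ?thesis unfolding E_def by (rule finsupp_E[of K]) (use K fs_ellp in blast)
  qed
  have EStrong: "\<exists>K2\<ge>0. \<forall>x\<in>ellp p. (\<forall>i. summable (\<lambda>j. a i j * x j)) \<and> matop a x \<in> L \<and>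
    (\<lambda>n. N (\<lambda>i. fsum a {..<n} x i - matop a x i)) \<longlonglongrightarrow> 0 \<and>
    N (matop a x) \<le> K2 * ellp_norm p x" if "E"
  proof -
    obtain K where K: "K > 0" "\<forall>F x. finite F \<longrightarrow> (\<forall>j\<in>F. 0 \<le> x j) \<longrightarrow>
                N (\<lambda>i. \<Sum>j\<in>F. x j * a i j) \<le> K * (\<Sum>j\<in>F. x j powr p) powr (1 / p)"
      using \<open>E\<close> unfolding E_def by blast
    show ?thesis using strong[OF K(2)] K(1) by (intro exI[of _ "2 * K"]) auto
  qed
  have EA: "A" if "E"
  proof -
    obtain K2 where K2: "K2 \<ge> 0" "\<forall>x\<in>ellp p. (\<forall>i. summable (\<lambda>j. a i j * x j)) \<and> matop a x \<in> L \<and>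
      (\<lambda>n. N (\<lambda>i. fsum a {..<n} x i - matop a x i)) \<longlonglongrightarrow> 0 \<and>
      N (matop a x) \<le> K2 * ellp_norm p x" using EStrong[OF \<open>E\<close>] by blast
    have a1: "\<forall>x\<in>ellp p. \<forall>i. summable (\<lambda>j. a i j * x j)" using K2(2) by blast
    have a2: "\<forall>x\<in>ellp p. matop a x \<in> L" using K2(2) by blast
    have a3: "\<forall>x\<in>ellp p. N (matop a x) \<le> K2 * ellp_norm p x" using K2(2) by blast
    show ?thesis unfolding A_def using a1 a2 a3 by blast
  qed
  have EC: "C" if "E"
  proof -
    obtain K2 where "K2 \<ge> 0" "\<forall>x\<in>ellp p. (\<forall>i. summable (\<lambda>j. a i j * x j)) \<and> matop a x \<in> L \<and>
      (\<lambda>n. N (\<lambda>i. fsum a {..<n} x i - matop a x i)) \<longlonglongrightarrow> 0 \<and>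
      N (matop a x) \<le> K2 * ellp_norm p x" using EStrong[OF \<open>E\<close>] by blast
    then show ?thesis unfolding C_def using S_C by blast
  qed
  have CE: "E" if "C"
    unfolding E_def by (rule C_E[OF fat _ K0']) (use \<open>C\<close> C_def in auto)
  have AB: "B" if "A"
  proof -
    have sm: "\<forall>x\<in>ellp p. \<forall>i. summable (\<lambda>j. a i j * x j)" and inL: "\<forall>x\<in>ellp p. matop a x \<in> L"
      and bd: "\<exists>K. \<forall>x\<in>ellp p. N (matop a x) \<le> K * ellp_norm p x" using \<open>A\<close> unfolding A_def by blast+
    have add: "matop a (\<lambda>i. x i + y i) = (\<lambda>i. matop a x i + matop a y i)" if "x \<in> ellp p" "y \<in> ellp p" for x y
    proof
      fix i
      have "matop a x i + matop a y i = (\<Sum>j. a i j * x j + a i j * y j)"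
        unfolding matop_def by (rule suminf_add) (use sm that in blast)+
      then show "matop a (\<lambda>i. x i + y i) i = matop a x i + matop a y i"
        unfolding matop_def by (simp add: distrib_left)
    qed
    have smul: "matop a (\<lambda>i. c * x i) = (\<lambda>i. c * matop a x i)" if "x \<in> ellp p" for c x
    proof
      fix i
      have "c * matop a x i = (\<Sum>j. c * (a i j * x j))"
        unfolding matop_def by (rule suminf_mult[symmetric]) (use sm that in blast)
      then show "matop a (\<lambda>i. c * x i) i = c * matop a x i"
        unfolding matop_def by (simp add: algebra_simps)
    qed
    show ?thesis unfolding B_def
      by (rule exI[of _ "matop a"]) (use inL add smul bd in blast)
  qed
  have BE: "E" if "B"
  proof -
    obtain T K where T: "\<forall>x\<in>ellp p. N (T x) \<le> K * ellp_norm p x" "\<forall>x\<in>ell1. T x = matop a x"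
      using \<open>B\<close> unfolding B_def by blast
    have "\<forall>y::seq. (\<exists>F::nat set. finite F \<and> (\<forall>j. j \<notin> F \<longrightarrow> y j = 0)) \<longrightarrow> N (matop a y) \<le> K * ellp_norm p y"
    proof (intro allI impI)
      fix y :: seq assume h: "\<exists>F::nat set. finite F \<and> (\<forall>j. j \<notin> F \<longrightarrow> y j = 0)"
      then have "N (T y) \<le> K * ellp_norm p y" "T y = matop a y" using T fs_ellp[OF h] fs_ell1[OF h] by auto
      then show "N (matop a y) \<le> K * ellp_norm p y" by simp
    qed
    then show ?thesis unfolding E_def by (rule finsupp_E)
  qed
  have CD: "D" if "C" using C_D \<open>C\<close> unfolding C_def D_def by blast
  have DC: "C" if "D" using D_C \<open>D\<close> unfolding C_def D_def by blast
  show ?thesis using AE EA EC CE AB BE CD DC by blast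
qed

end
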